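(* Let $p\in(0,1)$ and $p_{-}=\min\{p,1/2\}$. For the probabilistic triad dynamics with parameter $p$ on the triadic cycle $TC_{n}$, the time to social balance $\tau_{SB}(TC_n)$ is $O(n/p_{-})$.
   Context: Edges are labeled $\pm1$; a triangle is balanced if the product of its edge labels is $1$. Probabilistic triad dynamics with parameter $p$: while an imbalanced triangle exists, choose an imbalanced triangle $T$ uniformly at random; if $T$ has a single negative edge $e$, then with probability $p$ turn $e$ positive and with probability $1-p$ turn one of the other two edges of $T$ (chosen at random) negative; otherwise ($T$ has three negative edges) change the label of a uniformly random edge of $T$. The triadic cycle $TC_n$ is the graph consisting of $n$ triangles chained together, consecutive triangles sharing an edge, with the two free edges $AB$ and $CD$ of the extreme triangles of the chain glued by identifying $A\equiv C$, $B\equiv D$; thus each triangle shares one edge with each of its two neighbours and has one edge belonging to no other triangle. For such a graph, $\tau_{SB}(G)$ is the maximum over all initial labelings $s$ of the expected number of steps for the dynamics started at $s$ to reach a state with no imbalanced triangle. *)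

theory Defs
  imports "HOL-Probability.Probability"
begin

text \<open>Signed graphs: a graph is given by its edge set E (a set of 2-element vertex sets);
  a labeling assigns to each edge a sign in {-1,1} (values outside E are irrelevant).\<close>

definition tri_edges :: "'a set \<Rightarrow> 'a set set" where
  "tri_edges T = {e. e \<subseteq> T \<and> card e = 2}"

definition triangles :: "'a set set \<Rightarrow> 'a set set" where
  "triangles E = {T. card T = 3 \<and> tri_edges T \<subseteq> E}"

definition balanced_tri :: "('a set \<Rightarrow> int) \<Rightarrow> 'a set \<Rightarrow> bool" where
  "balanced_tri s T \<longleftrightarrow> (\<Prod>e\<in>tri_edges T. s e) = 1"

definition imbalanced :: "'a set set \<Rightarrow> ('a set \<Rightarrow> int) \<Rightarrow> 'a set set" where
  "imbalanced E s = {T \<in> triangles E. \<not> balanced_tri s T}"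

definition triad_step :: "real \<Rightarrow> 'a set set \<Rightarrow> ('a set \<Rightarrow> int) \<Rightarrow> ('a set \<Rightarrow> int) pmf" where
  "triad_step p E s =
    (if imbalanced E s = {} then return_pmf s
     else pmf_of_set (imbalanced E s) \<bind> (\<lambda>T.
       let N = {e \<in> tri_edges T. s e = -1} in
       if card N = 1 then
         bernoulli_pmf p \<bind> (\<lambda>b.
           if b then return_pmf (s(the_elem N := 1))
           else map_pmf (\<lambda>f. s(f := -1)) (pmf_of_set (tri_edges T - N)))
       else map_pmf (\<lambda>f. s(f := - s f)) (pmf_of_set (tri_edges T))))"

fun triad_dist :: "real \<Rightarrow> 'a set set \<Rightarrow> ('a set \<Rightarrow> int) \<Rightarrow> nat \<Rightarrow> ('a set \<Rightarrow> int) pmf" where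
  "triad_dist p E s 0 = return_pmf s"
| "triad_dist p E s (Suc t) = triad_dist p E s t \<bind> triad_step p E"

text \<open>Expected number of steps to reach a state with no imbalanced triangle:
  E[T] = sum over t of P(T > t) = sum over t of P(state at time t is not balanced).\<close>
definition expected_time :: "real \<Rightarrow> 'a set set \<Rightarrow> ('a set \<Rightarrow> int) \<Rightarrow> ennreal" where
  "expected_time p E s =
     (\<Sum>t. ennreal (measure_pmf.prob (triad_dist p E s t) {x. imbalanced E x \<noteq> {}}))"

definition tau_SB :: "real \<Rightarrow> 'a set set \<Rightarrow> ennreal" where
  "tau_SB p E = (SUP s \<in> {s. \<forall>e\<in>E. s e \<in> {-1, 1}}. expected_time p E s)"

text \<open>The triadic cycle TC_n: vertices 0..n-1, triangles {i,i+1,i+2} (mod n) chained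
  cyclically; edge set = {i,i+1} and {i,i+2} mod n (the square of the n-cycle).\<close>
definition TC_edges :: "nat \<Rightarrow> nat set set" where
  "TC_edges n = {{i, (i + 1) mod n} | i. i < n} \<union> {{i, (i + 2) mod n} | i. i < n}"

end

theory Submission
  imports Defs
begin


definition priv :: "'a set set \<Rightarrow> 'a set \<Rightarrow> 'a set \<Rightarrow> bool" where
  "priv E T f \<longleftrightarrow> (\<forall>T'\<in>triangles E. f \<in> tri_edges T' \<longrightarrow> T' = T)"

definition good :: "'a set set \<Rightarrow> bool" where
  "good E \<longleftrightarrow> finite E \<and> finite (triangles E) \<and>
     (\<forall>T\<in>triangles E. (\<exists>f\<in>tri_edges T. priv E T f) \<and>
        (\<forall>f\<in>tri_edges T. \<forall>T1\<in>triangles E. \<forall>T2\<in>triangles E.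
            f \<in> tri_edges T1 \<longrightarrow> f \<in> tri_edges T2 \<longrightarrow> T1 \<noteq> T \<longrightarrow> T2 \<noteq> T \<longrightarrow> T1 = T2))"

definition SS :: "'a set set \<Rightarrow> ('a set \<Rightarrow> int) set" where
  "SS E = {s. \<forall>e\<in>E. s e \<in> {-1, 1}}"

definition negs :: "'a set set \<Rightarrow> ('a set \<Rightarrow> int) \<Rightarrow> 'a set set" where
  "negs E s = {e\<in>E. s e = -1}"

definition Phi :: "real \<Rightarrow> real \<Rightarrow> 'a set set \<Rightarrow> ('a set \<Rightarrow> int) \<Rightarrow> real" where
  "Phi a b E s = a * card (imbalanced E s) + b * card (negs E s)"

lemma tri_edges_3:
  assumes "a \<noteq> b" "a \<noteq> c" "b \<noteq> c"
  shows "tri_edges {a,b,c} = {{a,b},{a,c},{b,c}}"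
proof
  show "tri_edges {a,b,c} \<subseteq> {{a,b},{a,c},{b,c}}"
  proof
    fix e assume "e \<in> tri_edges {a,b,c}"
    then have "e \<subseteq> {a,b,c}" "card e = 2" by (auto simp: tri_edges_def)
    then obtain x y where "x \<noteq> y" "e = {x,y}" by (auto simp: card_2_iff)
    with \<open>e \<subseteq> {a,b,c}\<close> show "e \<in> {{a,b},{a,c},{b,c}}" by auto
  qed
  show "{{a,b},{a,c},{b,c}} \<subseteq> tri_edges {a,b,c}"
    using assms by (auto simp: tri_edges_def)
qed

lemma tri_edges_card:
  assumes "T \<in> triangles E"
  shows "card (tri_edges T) = 3" "finite (tri_edges T)"
proof -
  obtain a b c where "T = {a,b,c}" "a \<noteq> b" "b \<noteq> c" "a \<noteq> c"
    using assms by (auto simp: triangles_def card_3_iff)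
  then have "tri_edges T = {{a,b},{a,c},{b,c}}" by (simp add: tri_edges_3)
  moreover have "{a,b} \<noteq> {a,c}" "{a,b} \<noteq> {b,c}" "{a,c} \<noteq> {b,c}"
    using \<open>a \<noteq> b\<close> \<open>b \<noteq> c\<close> \<open>a \<noteq> c\<close> by (auto simp: doubleton_eq_iff)
  ultimately show "card (tri_edges T) = 3" "finite (tri_edges T)" by auto
qed

lemma prod_pm:
  fixes g :: "'b \<Rightarrow> int"
  assumes "finite A" "\<forall>e\<in>A. g e \<in> {-1,1}"
  shows "prod g A = (-1) ^ card {e\<in>A. g e = -1}"
  using assms
proof (induction A rule: finite_induct)
  case empty then show ?case by simp
next
  case (insert x F)
  have fin: "finite {e\<in>F. g e = -1}" using insert by auto
  show ?case
  proof (cases "g x = -1")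
    case True
    then have "{e\<in>insert x F. g e = -1} = insert x {e\<in>F. g e = -1}" by auto
    moreover have "x \<notin> {e\<in>F. g e = -1}" using insert by auto
    ultimately show ?thesis using insert True fin by simp
  next
    case False
    then have "g x = 1" using insert by auto
    moreover have "{e\<in>insert x F. g e = -1} = {e\<in>F. g e = -1}" using False by auto
    ultimately show ?thesis using insert by simp
  qed
qed

lemma flip_other:
  assumes "f \<notin> tri_edges T'"
  shows "balanced_tri (s(f := v)) T' = balanced_tri s T'"
  unfolding balanced_tri_def using assms by (intro arg_cong[where f="\<lambda>x. x = 1"] prod.cong) auto

lemma in_SS: "s \<in> SS E \<Longrightarrow> e \<in> E \<Longrightarrow> s e = -1 \<or> s e = 1"
  by (auto simp: SS_def)

lemma tri_in_E: "T \<in> triangles E \<Longrightarrow> f \<in> tri_edges T \<Longrightarrow> f \<in> E"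
  by (auto simp: triangles_def)

lemma imb_prod:
  assumes "T \<in> imbalanced E s" "s \<in> SS E"
  shows "(\<Prod>e\<in>tri_edges T. s e) = -1"
proof -
  have T: "T \<in> triangles E" using assms by (auto simp: imbalanced_def)
  have "prod s (tri_edges T) = (-1) ^ card {e\<in>tri_edges T. s e = -1}"
    using tri_edges_card[OF T] assms(2) tri_in_E[OF T]
    by (intro prod_pm) (auto simp: SS_def)
  moreover have "prod s (tri_edges T) \<noteq> 1" using assms by (auto simp: imbalanced_def balanced_tri_def)
  ultimately show ?thesis by (metis neg_one_even_power neg_one_odd_power)
qed

lemma flip_self:
  assumes "T \<in> imbalanced E s" "s \<in> SS E" "f \<in> tri_edges T"
  shows "balanced_tri (s(f := - s f)) T"
proof -
  have T: "T \<in> triangles E" using assms by (auto simp: imbalanced_def)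
  have fin: "finite (tri_edges T)" using tri_edges_card[OF T] by simp
  have a: "prod (s(f := - s f)) (tri_edges T) = (s(f := - s f)) f * prod (s(f := - s f)) (tri_edges T - {f})"
    by (rule prod.remove[OF fin assms(3)])
  have b: "prod (s(f := - s f)) (tri_edges T - {f}) = prod s (tri_edges T - {f})"
    by (intro prod.cong) auto
  have c: "prod s (tri_edges T) = s f * prod s (tri_edges T - {f})"
    by (rule prod.remove[OF fin assms(3)])
  have "prod (s(f := - s f)) (tri_edges T) = - prod s (tri_edges T)"
    using a b c by simp
  then show ?thesis using imb_prod[OF assms(1,2)] by (simp add: balanced_tri_def)
qed

lemma imb_flip:
  assumes "T \<in> imbalanced E s" "s \<in> SS E" "f \<in> tri_edges T"
  shows "imbalanced E (s(f := - s f)) \<subseteq> (imbalanced E s - {T}) \<union> ({T'\<in>triangles E. f \<in> tri_edges T'} - {T})"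
proof
  fix T' assume T': "T' \<in> imbalanced E (s(f := - s f))"
  have "T' \<noteq> T" using T' flip_self[OF assms] by (auto simp: imbalanced_def)
  moreover have "f \<notin> tri_edges T' \<Longrightarrow> T' \<in> imbalanced E s"
    using T' flip_other[of f T' s] by (auto simp: imbalanced_def)
  ultimately show "T' \<in> (imbalanced E s - {T}) \<union> ({T'\<in>triangles E. f \<in> tri_edges T'} - {T})"
    using T' by (auto simp: imbalanced_def)
qed

lemma card_imb_flip:
  assumes "good E" "T \<in> imbalanced E s" "s \<in> SS E" "f \<in> tri_edges T"
  shows "card (imbalanced E (s(f := - s f))) + (if priv E T f then 1 else 0) \<le> card (imbalanced E s)"
proof -
  have finT: "finite (triangles E)" using assms(1) by (simp add: good_def)
  have fin: "finite (imbalanced E s)" by (rule finite_subset[OF _ finT]) (auto simp: imbalanced_def)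
  have fin': "finite (imbalanced E (s(f := - s f)))" by (rule finite_subset[OF _ finT]) (auto simp: imbalanced_def)
  have TT: "T \<in> triangles E" using assms(2) by (auto simp: imbalanced_def)
  define Oth where "Oth = {T'\<in>triangles E. f \<in> tri_edges T'} - {T}"
  have finOth: "finite Oth" unfolding Oth_def using finT by auto
  have sub: "imbalanced E (s(f := - s f)) \<subseteq> (imbalanced E s - {T}) \<union> Oth"
    unfolding Oth_def by (rule imb_flip[OF assms(2-4)])
  have c1: "card (imbalanced E s - {T}) + 1 = card (imbalanced E s)"
    using assms(2) fin card_Suc_Diff1[of "imbalanced E s" T] by simp
  show ?thesis
  proof (cases "priv E T f")
    case True
    then have "Oth = {}" unfolding Oth_def priv_def by auto
    then have "card (imbalanced E (s(f := - s f))) \<le> card (imbalanced E s - {T})"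
      using sub fin by (intro card_mono) auto
    then show ?thesis using True c1 by simp
  next
    case False
    have "card Oth \<le> Suc 0"
    proof (subst card_le_Suc0_iff_eq[OF finOth], intro ballI)
      fix T1 T2 assume "T1 \<in> Oth" "T2 \<in> Oth"
      then show "T1 = T2" using assms(1) TT assms(4) unfolding good_def Oth_def by blast
    qed
    have "card (imbalanced E (s(f := - s f))) \<le> card ((imbalanced E s - {T}) \<union> Oth)"
      using sub fin finOth by (intro card_mono) auto
    also have "\<dots> \<le> card (imbalanced E s - {T}) + card Oth" by (rule card_Un_le)
    finally show ?thesis using False c1 \<open>card Oth \<le> Suc 0\<close> by simp
  qed
qed

lemma card_negs_flip:
  assumes "finite E" "s \<in> SS E" "f \<in> E"
  shows "real (card (negs E (s(f := - s f)))) = real (card (negs E s)) + (if s f = -1 then -1 else 1)"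
proof (cases "s f = -1")
  case True
  then have "negs E (s(f := - s f)) = negs E s - {f}" by (auto simp: negs_def)
  moreover have "f \<in> negs E s" using True assms by (auto simp: negs_def)
  moreover have "finite (negs E s)" using assms by (auto simp: negs_def)
  ultimately have "card (negs E (s(f := - s f))) + 1 = card (negs E s)"
    using card_Suc_Diff1[of "negs E s" f] by simp
  then have "real (card (negs E (s(f := - s f)))) + 1 = real (card (negs E s))"
    by (metis of_nat_1 of_nat_add)
  then show ?thesis using True by simp
next
  case False
  then have sf: "s f = 1" using in_SS[OF assms(2,3)] by auto
  then have "negs E (s(f := - s f)) = insert f (negs E s)" using assms by (auto simp: negs_def)
  moreover have "f \<notin> negs E s" using sf by (auto simp: negs_def)
  moreover have "finite (negs E s)" using assms by (auto simp: negs_def)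
  ultimately show ?thesis using sf by simp
qed

lemma Phi_flip:
  assumes "good E" "T \<in> imbalanced E s" "s \<in> SS E" "f \<in> tri_edges T" "a \<ge> 0"
  shows "Phi a b E (s(f := - s f)) \<le> Phi a b E s + b * (if s f = -1 then -1 else 1) - (if priv E T f then a else 0)"
proof -
  have fE: "f \<in> E" using assms(2,4) tri_in_E by (auto simp: imbalanced_def)
  have fin: "finite E" using assms(1) by (simp add: good_def)
  have c: "real (card (imbalanced E (s(f := - s f)))) + (if priv E T f then 1 else 0) \<le> real (card (imbalanced E s))"
    using card_imb_flip[OF assms(1-4)] by (cases "priv E T f") (auto simp del: of_nat_add simp add: of_nat_add[symmetric])
  have "a * real (card (imbalanced E (s(f := - s f)))) + a * (if priv E T f then 1 else 0) \<le> a * real (card (imbalanced E s))"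
    using mult_left_mono[OF c assms(5)] by (simp add: distrib_left)
  then show ?thesis unfolding Phi_def card_negs_flip[OF fin assms(3) fE]
    by (cases "priv E T f") (auto simp: algebra_simps)
qed



lemma Phi_nonneg: "a \<ge> 0 \<Longrightarrow> b \<ge> 0 \<Longrightarrow> Phi a b E s \<ge> 0"
  by (simp add: Phi_def)

lemma avg_le:
  fixes h :: "'b \<Rightarrow> real" and c :: real
  assumes "finite A" "A \<noteq> {}" "\<And>x. x \<in> A \<Longrightarrow> h x \<ge> 0" "(\<Sum>x\<in>A. h x) \<le> c * card A"
  shows "(\<integral>\<^sup>+x. ennreal (h x) \<partial>measure_pmf (pmf_of_set A)) \<le> ennreal c"
proof -
  have cp: "real (card A) > 0" using assms by (simp add: card_gt_0_iff)
  have "(\<integral>\<^sup>+x. ennreal (h x) \<partial>measure_pmf (pmf_of_set A)) = (\<Sum>x\<in>A. ennreal (h x)) / card A"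
    using assms by (simp add: nn_integral_pmf_of_set)
  also have "\<dots> = ennreal (\<Sum>x\<in>A. h x) / ennreal (real (card A))"
    using assms by (simp add: sum_ennreal ennreal_of_nat_eq_real_of_nat)
  also have "\<dots> = ennreal ((\<Sum>x\<in>A. h x) / real (card A))"
    using cp assms(3) by (simp add: divide_ennreal sum_nonneg)
  also have "\<dots> \<le> ennreal c"
    using assms(4) cp by (intro ennreal_leI) (simp add: divide_le_eq)
  finally show ?thesis .
qed

lemma sum_priv_bound:
  fixes h u :: "'b \<Rightarrow> real"
  assumes "finite A" "f0 \<in> A" "P f0" "a \<ge> 0" "\<And>f. f \<in> A \<Longrightarrow> h f \<le> u f - (if P f then a else 0)"
  shows "(\<Sum>f\<in>A. h f) \<le> (\<Sum>f\<in>A. u f) - a"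
proof -
  have "(\<Sum>f\<in>A. h f) = h f0 + (\<Sum>f\<in>A - {f0}. h f)" using assms by (simp add: sum.remove)
  also have "\<dots> \<le> (u f0 - a) + (\<Sum>f\<in>A - {f0}. u f)"
  proof (intro add_mono sum_mono)
    show "h f0 \<le> u f0 - a" using assms(5)[of f0] assms(2,3) by simp
    fix f assume "f \<in> A - {f0}"
    then show "h f \<le> u f" using assms(5)[of f] assms(4) by (auto split: if_splits)
  qed
  also have "\<dots> = (\<Sum>f\<in>A. u f) - a" using assms by (simp add: sum.remove)
  finally show ?thesis .
qed

lemma ineqs:
  fixes p :: real
  assumes "0 < p" "p < 1"
  shows "p * (12 / min p (1/2)) \<ge> 12" "(1 - p) * (12 / min p (1/2)) / 2 \<ge> 3 - 4 * p"
proof -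
  show "p * (12 / min p (1/2)) \<ge> 12"
  proof (cases "p \<le> 1/2")
    case True then show ?thesis using assms by (simp add: min_def)
  next
    case False then show ?thesis using assms by (simp add: min_def)
  qed
  show "(1 - p) * (12 / min p (1/2)) / 2 \<ge> 3 - 4 * p"
  proof (cases "p \<le> 1/2")
    case True
    then have "(1 - p) * (12 / min p (1/2)) / 2 = 6 * (1 - p) / p" using assms by (simp add: min_def field_simps)
    also have "6 * (1 - p) / p \<ge> 6" using True assms by (simp add: le_divide_eq)
    finally show ?thesis using assms by simp
  next
    case False then show ?thesis using assms by (simp add: min_def)
  qed
qed



lemma avg_eq:
  fixes h :: "'b \<Rightarrow> real"
  assumes "finite A" "A \<noteq> {}" "\<And>x. x \<in> A \<Longrightarrow> h x \<ge> 0"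
  shows "(\<integral>\<^sup>+x. ennreal (h x) \<partial>measure_pmf (pmf_of_set A)) = ennreal ((\<Sum>x\<in>A. h x) / card A)"
proof -
  have cp: "real (card A) > 0" using assms by (simp add: card_gt_0_iff)
  have "(\<integral>\<^sup>+x. ennreal (h x) \<partial>measure_pmf (pmf_of_set A)) = (\<Sum>x\<in>A. ennreal (h x)) / card A"
    using assms by (simp add: nn_integral_pmf_of_set)
  also have "\<dots> = ennreal (\<Sum>x\<in>A. h x) / ennreal (real (card A))"
    using assms by (simp add: sum_ennreal ennreal_of_nat_eq_real_of_nat)
  also have "\<dots> = ennreal ((\<Sum>x\<in>A. h x) / real (card A))"
    using cp assms(3) by (simp add: divide_ennreal sum_nonneg)
  finally show ?thesis .
qed

lemma move_bound:
  assumes good: "good E" and T: "T \<in> imbalanced E s" and sS: "s \<in> SS E" and p: "0 < p" "p < 1"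
    and adef: "a = 12 / min p (1/2)"
  shows "(\<integral>\<^sup>+y. ennreal (Phi a 2 E y) \<partial>measure_pmf
     (let N = {e \<in> tri_edges T. s e = -1} in
       if card N = 1 then
         bernoulli_pmf p \<bind> (\<lambda>b.
           if b then return_pmf (s(the_elem N := 1))
           else map_pmf (\<lambda>f. s(f := -1)) (pmf_of_set (tri_edges T - N)))
       else map_pmf (\<lambda>f. s(f := - s f)) (pmf_of_set (tri_edges T))))
     \<le> ennreal (Phi a 2 E s - 1)"
proof -
  have a0: "a \<ge> 0" using adef p by simp
  have TT: "T \<in> triangles E" using T by (auto simp: imbalanced_def)
  note c3 = tri_edges_card[OF TT]
  have tE: "\<And>f. f \<in> tri_edges T \<Longrightarrow> f \<in> E" using tri_in_E[OF TT] .
  define NT where "NT = {e \<in> tri_edges T. s e = -1}"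
  have "prod s (tri_edges T) = (-1) ^ card NT"
    unfolding NT_def using c3 sS tE by (intro prod_pm) (auto simp: SS_def)
  then have odd: "odd (card NT)" using imb_prod[OF T sS] by (metis neg_one_even_power one_neq_neg_one)
  have le3: "card NT \<le> 3" using c3 unfolding NT_def by (metis (no_types, lifting) card_mono mem_Collect_eq subsetI)
  have cNT: "card NT = 1 \<or> card NT = 3" using odd le3 by presburger
  obtain f0 where f0: "f0 \<in> tri_edges T" "priv E T f0" using good TT by (auto simp: good_def)
  have PF: "\<And>f. f \<in> tri_edges T \<Longrightarrow> Phi a 2 E (s(f := - s f)) \<le> Phi a 2 E s + 2 * (if s f = -1 then -1 else 1) - (if priv E T f then a else 0)"
    using Phi_flip[OF good T sS _ a0] by blast
  have Pn: "\<And>s. Phi a 2 E s \<ge> 0" using a0 by (simp add: Phi_nonneg)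
  show ?thesis
  proof (cases "card NT = 1")
    case True
    then obtain g where g: "NT = {g}" by (auto simp: card_Suc_eq)
    have gT: "g \<in> tri_edges T" and sg: "s g = -1" using g unfolding NT_def by auto
    define A where "A = tri_edges T - {g}"
    have finA: "finite A" using c3 by (simp add: A_def)
    have cA: "card A = 2" using c3 gT by (simp add: A_def)
    then have Ane: "A \<noteq> {}" by auto
    have sA: "\<And>f. f \<in> A \<Longrightarrow> s f = 1"
    proof -
      fix f assume f: "f \<in> A"
      then have "f \<notin> NT" using g by (auto simp: A_def)
      then show "s f = 1" using f in_SS[OF sS tE[of f]] by (auto simp: A_def NT_def)
    qed
    have AT: "A \<subseteq> tri_edges T" by (auto simp: A_def)
    define h where "h f = Phi a 2 E (s(f := -1))" for f
    have hb: "\<And>f. f \<in> A \<Longrightarrow> h f \<le> (Phi a 2 E s + 2) - (if priv E T f then a else 0)"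
    proof -
      fix f assume f: "f \<in> A"
      have "s(f := -1) = s(f := - s f)" using sA[OF f] by simp
      then show "h f \<le> (Phi a 2 E s + 2) - (if priv E T f then a else 0)"
        using PF[of f] f AT sA[OF f] by (auto simp: h_def)
    qed
    have s1: "s(g := 1) = s(g := - s g)" using sg by simp
    have X1: "Phi a 2 E (s(g := 1)) \<le> Phi a 2 E s - 2 - (if priv E T g then a else 0)"
      using PF[OF gT] sg by simp
    have int: "(\<integral>\<^sup>+y. ennreal (Phi a 2 E y) \<partial>measure_pmf
         (bernoulli_pmf p \<bind> (\<lambda>b. if b then return_pmf (s(g := 1))
           else map_pmf (\<lambda>f. s(f := -1)) (pmf_of_set A))))
       = ennreal (Phi a 2 E (s(g := 1)) * p + ((\<Sum>f\<in>A. h f) / card A) * (1 - p))"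
    proof -
      have "(\<integral>\<^sup>+y. ennreal (Phi a 2 E y) \<partial>measure_pmf
         (bernoulli_pmf p \<bind> (\<lambda>b. if b then return_pmf (s(g := 1))
           else map_pmf (\<lambda>f. s(f := -1)) (pmf_of_set A))))
        = ennreal (Phi a 2 E (s(g := 1))) * ennreal p + (\<integral>\<^sup>+x. ennreal (h x) \<partial>measure_pmf (pmf_of_set A)) * ennreal (1 - p)"
        using p by (simp add: h_def nn_integral_bind_pmf)
      also have "\<dots> = ennreal (Phi a 2 E (s(g := 1))) * ennreal p + ennreal ((\<Sum>f\<in>A. h f) / card A) * ennreal (1 - p)"
        using avg_eq[OF finA Ane, of h] Pn by (simp add: h_def)
      also have "\<dots> = ennreal (Phi a 2 E (s(g := 1)) * p + ((\<Sum>f\<in>A. h f) / card A) * (1 - p))"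
      proof -
        define X where "X = Phi a 2 E (s(g := 1))"
        define Y where "Y = (\<Sum>f\<in>A. h f) / card A"
        have X0: "X \<ge> 0" using Pn by (simp add: X_def)
        have Y0: "Y \<ge> 0" using Pn by (simp add: Y_def h_def sum_nonneg divide_nonneg_nonneg)
        have "ennreal (X * p + Y * (1 - p)) = ennreal (X * p) + ennreal (Y * (1 - p))"
          using X0 Y0 p by (intro ennreal_plus) auto
        also have "\<dots> = ennreal X * ennreal p + ennreal Y * ennreal (1 - p)"
          using X0 Y0 p by (simp add: ennreal_mult)
        finally show ?thesis by (simp add: X_def Y_def)
      qed
      finally show ?thesis .
    qed
    have real: "Phi a 2 E (s(g := 1)) * p + ((\<Sum>f\<in>A. h f) / card A) * (1 - p) \<le> Phi a 2 E s - 1"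
    proof (cases "priv E T g")
      case True
      have S: "(\<Sum>f\<in>A. h f) \<le> 2 * (Phi a 2 E s + 2)"
      proof -
        have "\<And>i. i \<in> A \<Longrightarrow> h i \<le> Phi a 2 E s + 2"
          using hb a0 by (smt (verit))
        then have "sum h A \<le> real (card A) * (Phi a 2 E s + 2)" by (rule sum_bounded_above)
        then show ?thesis using cA by simp
      qed
      have m1: "Phi a 2 E (s(g := 1)) * p \<le> (Phi a 2 E s - 2 - a) * p"
        using X1 True p by (intro mult_right_mono) auto
      have m2: "((\<Sum>f\<in>A. h f) / card A) * (1 - p) \<le> (Phi a 2 E s + 2) * (1 - p)"
        using S cA p by (intro mult_right_mono) auto
      have "p * a \<ge> 12" using ineqs(1)[OF p] adef by simp
      then show ?thesis using m1 m2 p by (simp add: algebra_simps)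
    next
      case False
      have f0A: "f0 \<in> A" using f0 False by (auto simp: A_def)
      have S: "(\<Sum>f\<in>A. h f) \<le> (\<Sum>f\<in>A. Phi a 2 E s + 2) - a"
        by (rule sum_priv_bound[where P="priv E T" and u="\<lambda>_. Phi a 2 E s + 2", OF finA f0A f0(2) a0 hb])
      then have S': "(\<Sum>f\<in>A. h f) / card A \<le> Phi a 2 E s + 2 - a / 2"
        using cA by simp
      have m1: "Phi a 2 E (s(g := 1)) * p \<le> (Phi a 2 E s - 2) * p"
        using X1 False p by (intro mult_right_mono) auto
      have m2: "((\<Sum>f\<in>A. h f) / card A) * (1 - p) \<le> (Phi a 2 E s + 2 - a / 2) * (1 - p)"
        using S' p by (intro mult_right_mono) auto
      have i2: "(1 - p) * a / 2 \<ge> 3 - 4 * p" using ineqs(2)[OF p] adef by simp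
      have k: "Phi a 2 E (s(g := 1)) * p + ((\<Sum>f\<in>A. h f) / card A) * (1 - p) \<le> (Phi a 2 E s - 2) * p + (Phi a 2 E s + 2 - a / 2) * (1 - p)"
        by (rule add_mono[OF m1 m2])
      have e: "(Phi a 2 E s - 2) * p + (Phi a 2 E s + 2 - a / 2) * (1 - p) = Phi a 2 E s + 2 - 4 * p - (1 - p) * a / 2"
        by (simp add: algebra_simps)
      show ?thesis using k e i2 by linarith
    qed
    have eqM: "(let N = {e \<in> tri_edges T. s e = -1} in
       if card N = 1 then
         bernoulli_pmf p \<bind> (\<lambda>b.
           if b then return_pmf (s(the_elem N := 1))
           else map_pmf (\<lambda>f. s(f := -1)) (pmf_of_set (tri_edges T - N)))
       else map_pmf (\<lambda>f. s(f := - s f)) (pmf_of_set (tri_edges T))) =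
       bernoulli_pmf p \<bind> (\<lambda>b. if b then return_pmf (s(g := 1))
           else map_pmf (\<lambda>f. s(f := -1)) (pmf_of_set A))"
      unfolding Let_def NT_def[symmetric] g A_def the_elem_eq by simp
    show ?thesis unfolding eqM int by (rule ennreal_leI[OF real])
  next
    case False
    then have c3': "card NT = 3" using cNT by simp
    have NTe: "NT = tri_edges T"
      using c3 c3' by (intro card_subset_eq) (auto simp: NT_def)
    have sn: "\<And>f. f \<in> tri_edges T \<Longrightarrow> s f = -1" using NTe unfolding NT_def by blast
    define h where "h f = Phi a 2 E (s(f := - s f))" for f
    have hb: "\<And>f. f \<in> tri_edges T \<Longrightarrow> h f \<le> (Phi a 2 E s - 2) - (if priv E T f then a else 0)"
      using PF sn by (auto simp: h_def)
    have S: "(\<Sum>f\<in>tri_edges T. h f) \<le> (\<Sum>f\<in>tri_edges T. Phi a 2 E s - 2) - a"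
      by (rule sum_priv_bound[where P="priv E T" and u="\<lambda>_. Phi a 2 E s - 2", OF c3(2) f0 a0 hb])
    then have S': "(\<Sum>f\<in>tri_edges T. h f) / card (tri_edges T) \<le> Phi a 2 E s - 1"
      using c3 a0 by (simp add: field_simps)
    have ne: "tri_edges T \<noteq> {}" using c3 by auto
    have "(\<integral>\<^sup>+y. ennreal (Phi a 2 E y) \<partial>measure_pmf (map_pmf (\<lambda>f. s(f := - s f)) (pmf_of_set (tri_edges T))))
         = ennreal ((\<Sum>f\<in>tri_edges T. h f) / card (tri_edges T))"
      using avg_eq[OF c3(2) ne, of h] Pn by (simp add: h_def)
    also have "\<dots> \<le> ennreal (Phi a 2 E s - 1)" using S' by (intro ennreal_leI)
    finally show ?thesis unfolding Let_def NT_def[symmetric] using False by simp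
  qed
qed



lemma step_SS:
  assumes good: "good E" and sS: "s \<in> SS E" and p: "0 < p" "p < 1"
    and x: "x \<in> set_pmf (triad_step p E s)"
  shows "x \<in> SS E"
proof (cases "imbalanced E s = {}")
  case True then show ?thesis using x sS by (simp add: triad_step_def)
next
  case False
  have finT: "finite (triangles E)" using good by (simp add: good_def)
  have fin: "finite (imbalanced E s)" by (rule finite_subset[OF _ finT]) (auto simp: imbalanced_def)
  from x False fin obtain T where T: "T \<in> imbalanced E s" and
    x': "x \<in> set_pmf (let N = {e \<in> tri_edges T. s e = -1} in
       if card N = 1 then
         bernoulli_pmf p \<bind> (\<lambda>b.
           if b then return_pmf (s(the_elem N := 1))
           else map_pmf (\<lambda>f. s(f := -1)) (pmf_of_set (tri_edges T - N)))
       else map_pmf (\<lambda>f. s(f := - s f)) (pmf_of_set (tri_edges T)))"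
    by (auto simp: triad_step_def)
  have TT: "T \<in> triangles E" using T by (auto simp: imbalanced_def)
  note c3 = tri_edges_card[OF TT]
  have tE: "\<And>f. f \<in> tri_edges T \<Longrightarrow> f \<in> E" using tri_in_E[OF TT] .
  have upd: "\<And>f v. f \<in> E \<Longrightarrow> v \<in> {-1,1} \<Longrightarrow> s(f := v) \<in> SS E" using sS by (auto simp: SS_def)
  define NT where "NT = {e \<in> tri_edges T. s e = -1}"
  show ?thesis
  proof (cases "card NT = 1")
    case True
    then obtain g where g: "NT = {g}" by (auto simp: card_Suc_eq)
    have gT: "g \<in> tri_edges T" using g unfolding NT_def by auto
    have "card (tri_edges T - {g}) = 2" using c3 gT by simp
    then have ne: "tri_edges T - {g} \<noteq> {}" by (metis card.empty zero_neq_numeral)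
    have fin2: "finite (tri_edges T - {g})" using c3 by simp
    from x' have "x \<in> set_pmf (bernoulli_pmf p \<bind> (\<lambda>b. if b then return_pmf (s(g := 1))
           else map_pmf (\<lambda>f. s(f := -1)) (pmf_of_set (tri_edges T - {g}))))"
      unfolding Let_def NT_def[symmetric] g the_elem_eq by simp
    then obtain b where b: "x \<in> set_pmf (if b then return_pmf (s(g := 1))
           else map_pmf (\<lambda>f. s(f := -1)) (pmf_of_set (tri_edges T - {g})))"
      by (auto simp only: set_bind_pmf)
    have "x = s(g := 1) \<or> (\<exists>f\<in>tri_edges T - {g}. x = s(f := -1))"
    proof (cases b)
      case True then show ?thesis using b by simp
    next
      case False then show ?thesis using b set_pmf_of_set[OF ne fin2] by auto
    qed
    then show ?thesis using upd gT tE by auto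
  next
    case False
    have ne: "tri_edges T \<noteq> {}" using c3 by auto
    from x' have "\<exists>f\<in>tri_edges T. x = s(f := - s f)"
      unfolding Let_def NT_def[symmetric] using False ne c3 by auto
    then obtain f where f: "f \<in> tri_edges T" "x = s(f := - s f)" by blast
    have "- s f \<in> {-1, 1}" using in_SS[OF sS tE[OF f(1)]] by auto
    then show ?thesis using upd[OF tE[OF f(1)]] f by auto
  qed
qed

lemma drift:
  assumes good: "good E" and sS: "s \<in> SS E" and p: "0 < p" "p < 1"
    and adef: "a = 12 / min p (1/2)"
  shows "(\<integral>\<^sup>+y. ennreal (Phi a 2 E y) \<partial>measure_pmf (triad_step p E s)) + indicator {x. imbalanced E x \<noteq> {}} s
         \<le> ennreal (Phi a 2 E s)"
proof (cases "imbalanced E s = {}")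
  case True then show ?thesis by (simp add: triad_step_def)
next
  case False
  have a0: "a \<ge> 12"
  proof (cases "p \<le> 1/2")
    case True then show ?thesis using adef p by (simp add: min_def le_divide_eq)
  next
    case False then show ?thesis using adef p by (simp add: min_def)
  qed
  have finT: "finite (triangles E)" using good by (simp add: good_def)
  have fin: "finite (imbalanced E s)" by (rule finite_subset[OF _ finT]) (auto simp: imbalanced_def)
  have "(\<integral>\<^sup>+y. ennreal (Phi a 2 E y) \<partial>measure_pmf (triad_step p E s))
      = (\<integral>\<^sup>+T. (\<integral>\<^sup>+y. ennreal (Phi a 2 E y) \<partial>measure_pmf
     (let N = {e \<in> tri_edges T. s e = -1} in
       if card N = 1 then
         bernoulli_pmf p \<bind> (\<lambda>b.
           if b then return_pmf (s(the_elem N := 1))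
           else map_pmf (\<lambda>f. s(f := -1)) (pmf_of_set (tri_edges T - N)))
       else map_pmf (\<lambda>f. s(f := - s f)) (pmf_of_set (tri_edges T)))) \<partial>measure_pmf (pmf_of_set (imbalanced E s)))"
    using False by (simp add: triad_step_def nn_integral_bind_pmf)
  also have "\<dots> \<le> (\<integral>\<^sup>+T. ennreal (Phi a 2 E s - 1) \<partial>measure_pmf (pmf_of_set (imbalanced E s)))"
  proof (rule nn_integral_mono_AE, rule AE_pmfI)
    fix T assume "T \<in> set_pmf (pmf_of_set (imbalanced E s))"
    then have "T \<in> imbalanced E s" using False fin by simp
    then show "(\<integral>\<^sup>+y. ennreal (Phi a 2 E y) \<partial>measure_pmf
     (let N = {e \<in> tri_edges T. s e = -1} in
       if card N = 1 then
         bernoulli_pmf p \<bind> (\<lambda>b.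
           if b then return_pmf (s(the_elem N := 1))
           else map_pmf (\<lambda>f. s(f := -1)) (pmf_of_set (tri_edges T - N)))
       else map_pmf (\<lambda>f. s(f := - s f)) (pmf_of_set (tri_edges T)))) \<le> ennreal (Phi a 2 E s - 1)"
      by (rule move_bound[OF good _ sS p adef])
  qed
  also have "\<dots> = ennreal (Phi a 2 E s - 1)" by (simp add: measure_pmf.emeasure_space_1)
  finally have i: "(\<integral>\<^sup>+y. ennreal (Phi a 2 E y) \<partial>measure_pmf (triad_step p E s)) \<le> ennreal (Phi a 2 E s - 1)" .
  have "card (imbalanced E s) \<ge> 1" using False fin by (simp add: Suc_le_eq card_gt_0_iff)
  then have "Phi a 2 E s \<ge> 1" using a0 unfolding Phi_def
    by (smt (verit, ccfv_SIG) mult_le_cancel_left1 of_nat_0_le_iff of_nat_1 of_nat_mono mult_nonneg_nonneg)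
  then have "ennreal (Phi a 2 E s - 1) + 1 = ennreal (Phi a 2 E s)"
    using ennreal_plus[of "Phi a 2 E s - 1" 1] by simp
  then show ?thesis using i False by (simp add: add_right_mono) (metis add_right_mono)
qed



lemma time_bound:
  assumes good: "good E" and sS: "s \<in> SS E" and p: "0 < p" "p < 1"
    and adef: "a = 12 / min p (1/2)"
  shows "(\<Sum>k<t. ennreal (measure_pmf.prob (triad_dist p E s k) {x. imbalanced E x \<noteq> {}}))
      + (\<integral>\<^sup>+y. ennreal (Phi a 2 E y) \<partial>measure_pmf (triad_dist p E s t)) \<le> ennreal (Phi a 2 E s)
     \<and> set_pmf (triad_dist p E s t) \<subseteq> SS E"
proof (induction t)
  case 0
  then show ?case using sS by simp
next
  case (Suc t)
  define D where "D = triad_dist p E s t"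
  define I where "I = {x. imbalanced E x \<noteq> {}}"
  have IH1: "(\<Sum>k<t. ennreal (measure_pmf.prob (triad_dist p E s k) I)) + (\<integral>\<^sup>+y. ennreal (Phi a 2 E y) \<partial>measure_pmf D) \<le> ennreal (Phi a 2 E s)"
    and IH2: "set_pmf D \<subseteq> SS E" using Suc by (auto simp: D_def I_def)
  have set: "set_pmf (triad_dist p E s (Suc t)) \<subseteq> SS E"
    using IH2 step_SS[OF good _ p] by (auto simp: D_def)
  have pr: "ennreal (measure_pmf.prob D I) = (\<integral>\<^sup>+x. indicator I x \<partial>measure_pmf D)"
    by (simp add: measure_pmf.emeasure_eq_measure[symmetric])
  have "ennreal (measure_pmf.prob D I) + (\<integral>\<^sup>+y. ennreal (Phi a 2 E y) \<partial>measure_pmf (triad_dist p E s (Suc t)))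
      = (\<integral>\<^sup>+x. indicator I x \<partial>measure_pmf D) + (\<integral>\<^sup>+x. (\<integral>\<^sup>+y. ennreal (Phi a 2 E y) \<partial>measure_pmf (triad_step p E x)) \<partial>measure_pmf D)"
    unfolding pr by (simp add: D_def nn_integral_bind_pmf)
  also have "\<dots> = (\<integral>\<^sup>+x. (\<integral>\<^sup>+y. ennreal (Phi a 2 E y) \<partial>measure_pmf (triad_step p E x)) + indicator I x \<partial>measure_pmf D)"
    by (subst nn_integral_add) (auto simp: add.commute)
  also have "\<dots> \<le> (\<integral>\<^sup>+x. ennreal (Phi a 2 E x) \<partial>measure_pmf D)"
  proof (rule nn_integral_mono_AE, rule AE_pmfI)
    fix x assume "x \<in> set_pmf D"
    then have "x \<in> SS E" using IH2 by auto
    then show "(\<integral>\<^sup>+y. ennreal (Phi a 2 E y) \<partial>measure_pmf (triad_step p E x)) + indicator I x \<le> ennreal (Phi a 2 E x)"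
      unfolding I_def by (rule drift[OF good _ p adef])
  qed
  finally have st: "ennreal (measure_pmf.prob D I) + (\<integral>\<^sup>+y. ennreal (Phi a 2 E y) \<partial>measure_pmf (triad_dist p E s (Suc t)))
      \<le> (\<integral>\<^sup>+x. ennreal (Phi a 2 E x) \<partial>measure_pmf D)" .
  define S0 where "S0 = (\<Sum>k<t. ennreal (measure_pmf.prob (triad_dist p E s k) I))"
  define P where "P = ennreal (measure_pmf.prob D I)"
  define J where "J = (\<integral>\<^sup>+y. ennreal (Phi a 2 E y) \<partial>measure_pmf (triad_dist p E s (Suc t)))"
  define K where "K = (\<integral>\<^sup>+x. ennreal (Phi a 2 E x) \<partial>measure_pmf D)"
  have st': "P + J \<le> K" using st unfolding P_def J_def K_def .
  have IH1': "S0 + K \<le> ennreal (Phi a 2 E s)" using IH1 unfolding S0_def K_def .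
  have eq: "(\<Sum>k<Suc t. ennreal (measure_pmf.prob (triad_dist p E s k) I)) + J = S0 + (P + J)"
    unfolding S0_def P_def D_def by (simp add: add.assoc)
  have "S0 + (P + J) \<le> S0 + K" by (rule add_mono[OF order_refl st'])
  then have "(\<Sum>k<Suc t. ennreal (measure_pmf.prob (triad_dist p E s k) I)) + J \<le> ennreal (Phi a 2 E s)"
    using IH1' eq by (metis order_trans)
  then show ?case using set unfolding J_def I_def by blast
qed

lemma expected_time_bound:
  assumes good: "good E" and sS: "s \<in> SS E" and p: "0 < p" "p < 1"
    and adef: "a = 12 / min p (1/2)"
  shows "expected_time p E s \<le> ennreal (Phi a 2 E s)"
  unfolding expected_time_def
proof (rule suminf_le_const)
  fix t
  show "(\<Sum>k<t. ennreal (measure_pmf.prob (triad_dist p E s k) {x. imbalanced E x \<noteq> {}})) \<le> ennreal (Phi a 2 E s)"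
  proof (rule order_trans[OF _ conjunct1[OF time_bound[OF assms, of t]]])
    show "(\<Sum>k<t. ennreal (measure_pmf.prob (triad_dist p E s k) {x. imbalanced E x \<noteq> {}}))
      \<le> (\<Sum>k<t. ennreal (measure_pmf.prob (triad_dist p E s k) {x. imbalanced E x \<noteq> {}}))
      + (\<integral>\<^sup>+y. ennreal (Phi a 2 E y) \<partial>measure_pmf (triad_dist p E s t))"
      by (rule add_increasing2[OF zero_le order_refl])
  qed
qed (rule summableI)



lemma m1_eq: "(x::nat) < n \<Longrightarrow> (x + 1) mod n = (if x + 1 < n then x + 1 else x + 1 - n)"
  by (subst mod_if) auto
lemma m2_eq: "(x::nat) < n \<Longrightarrow> 2 \<le> n \<Longrightarrow> (x + 2) mod n = (if x + 2 < n then x + 2 else x + 2 - n)"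
  by (subst mod_if) auto

lemma adjL:
  fixes u v n :: nat
  assumes "u < v" "v < n" "3 \<le> n"
    "v = (u+1) mod n \<or> u = (v+1) mod n \<or> v = (u+2) mod n \<or> u = (v+2) mod n"
  shows "v = u+1 \<or> v = u+2 \<or> u+n = v+1 \<or> u+n = v+2"
proof -
  have "u < n" "2 \<le> n" using assms by auto
  show ?thesis using assms(4) unfolding m1_eq[OF \<open>u<n\<close>] m1_eq[OF \<open>v<n\<close>] m2_eq[OF \<open>u<n\<close> \<open>2 \<le> n\<close>] m2_eq[OF \<open>v<n\<close> \<open>2 \<le> n\<close>]
    using assms(1-3) by (auto split: if_splits)
qed

lemma sorted_tri:
  fixes a b c n :: nat
  assumes "7 \<le> n" "a < b" "b < c" "c < n"
   "b = a+1 \<or> b = a+2 \<or> a+n = b+1 \<or> a+n = b+2"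
   "c = a+1 \<or> c = a+2 \<or> a+n = c+1 \<or> a+n = c+2"
   "c = b+1 \<or> c = b+2 \<or> b+n = c+1 \<or> b+n = c+2"
  shows "(b = a+1 \<and> c = a+2) \<or> (a = 0 \<and> b+2 = n \<and> c+1 = n) \<or> (a = 0 \<and> b = 1 \<and> c+1 = n)"
  using assms by arith



definition rel :: "nat \<Rightarrow> nat \<Rightarrow> nat \<Rightarrow> bool" where
  "rel n u v \<longleftrightarrow> u < n \<and> v < n \<and> (v = (u+1) mod n \<or> u = (v+1) mod n \<or> v = (u+2) mod n \<or> u = (v+2) mod n)"

definition tri :: "nat \<Rightarrow> nat \<Rightarrow> nat set" where
  "tri n i = {i, (i+1) mod n, (i+2) mod n}"

lemma rel_sym: "rel n u v \<Longrightarrow> rel n v u"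
  unfolding rel_def by auto

lemma TC_mem: "{u,v} \<in> TC_edges n \<longleftrightarrow> rel n u v"
proof
  assume "{u,v} \<in> TC_edges n"
  then obtain i where i: "i < n" "{u,v} = {i, (i+1) mod n} \<or> {u,v} = {i, (i+2) mod n}"
    unfolding TC_edges_def by blast
  have "(i+1) mod n < n" "(i+2) mod n < n" using i by auto
  then show "rel n u v" using i unfolding rel_def by (auto simp: doubleton_eq_iff)
next
  assume r: "rel n u v"
  then have un: "u < n" "v < n" by (auto simp: rel_def)
  from r consider "v = (u+1) mod n" | "u = (v+1) mod n" | "v = (u+2) mod n" | "u = (v+2) mod n"
    unfolding rel_def by blast
  then show "{u,v} \<in> TC_edges n"
  proof cases
    case 1 then show ?thesis using un unfolding TC_edges_def by blast
  next
    case 2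
    then have "{u,v} = {v, (v+1) mod n}" by auto
    then show ?thesis using un unfolding TC_edges_def by blast
  next
    case 3 then show ?thesis using un unfolding TC_edges_def by blast
  next
    case 4
    then have "{u,v} = {v, (v+2) mod n}" by auto
    then show ?thesis using un unfolding TC_edges_def by blast
  qed
qed

lemma rel_lin:
  assumes "7 \<le> n" "u < v" "rel n u v"
  shows "v = u+1 \<or> v = u+2 \<or> u+n = v+1 \<or> u+n = v+2"
proof (rule adjL)
  show "u < v" "3 \<le> n" using assms by auto
  show "v < n" "v = (u+1) mod n \<or> u = (v+1) mod n \<or> v = (u+2) mod n \<or> u = (v+2) mod n"
    using assms(3) unfolding rel_def by blast+
qed

lemma sorted_char:
  assumes n: "7 \<le> n" and abc: "a < b" "b < c" and r: "rel n a b" "rel n a c" "rel n b c"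
  shows "\<exists>i<n. {a,b,c} = tri n i"
proof -
  have cn: "c < n" using r by (auto simp: rel_def)
  have "(b = a+1 \<and> c = a+2) \<or> (a = 0 \<and> b+2 = n \<and> c+1 = n) \<or> (a = 0 \<and> b = 1 \<and> c+1 = n)"
    using sorted_tri[OF n abc cn rel_lin[OF n _ r(1)] rel_lin[OF n _ r(2)] rel_lin[OF n _ r(3)]] abc by auto
  then consider "b = a+1" "c = a+2" | "a = 0" "b+2 = n" "c+1 = n" | "a = 0" "b = 1" "c+1 = n" by blast
  then show ?thesis
  proof cases
    case 1
    then have "{a,b,c} = tri n a" using cn unfolding tri_def by auto
    then show ?thesis using cn abc by (intro exI[of _ a]) auto
  next
    case 2
    have "(b+1) mod n = c" "(b+2) mod n = 0" using 2 n by auto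
    then have "{a,b,c} = tri n b" using 2 unfolding tri_def by auto
    then show ?thesis using cn abc by (intro exI[of _ b]) auto
  next
    case 3
    have "(c+1) mod n = 0" "(c+2) mod n = 1" using 3 n by (auto simp: mod_if)
    then have "{a,b,c} = tri n c" using 3 unfolding tri_def by auto
    then show ?thesis using cn abc by (intro exI[of _ c]) auto
  qed
qed

lemma tri_char:
  assumes n: "7 \<le> n" and T: "T \<in> triangles (TC_edges n)"
  shows "\<exists>i<n. T = tri n i"
proof -
  obtain x y z where xyz: "T = {x,y,z}" "x \<noteq> y" "y \<noteq> z" "x \<noteq> z"
    using T by (auto simp: triangles_def card_3_iff)
  have te: "tri_edges T = {{x,y},{x,z},{y,z}}" using xyz by (simp add: tri_edges_3)
  have r: "rel n x y" "rel n x z" "rel n y z"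
    using T te unfolding triangles_def by (auto simp: TC_mem[symmetric])
  note rs = r rel_sym[OF r(1)] rel_sym[OF r(2)] rel_sym[OF r(3)]
  have "\<exists>i<n. {x,y,z} = tri n i"
  proof (cases "x < y")
    case xy: True
    show ?thesis
    proof (cases "y < z")
      case True then show ?thesis using sorted_char[OF n xy True] rs xy by auto
    next
      case False
      then have "z < y" using xyz by auto
      show ?thesis
      proof (cases "x < z")
        case True
        from sorted_char[OF n True \<open>z<y\<close>] rs obtain i where "i<n" "{x,z,y} = tri n i" by auto
        moreover have "{x,z,y} = {x,y,z}" by auto
        ultimately show ?thesis by auto
      next
        case False
        then have "z < x" using xyz by auto
        from sorted_char[OF n this xy] rs obtain i where "i<n" "{z,x,y} = tri n i" by auto
        moreover have "{z,x,y} = {x,y,z}" by auto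
        ultimately show ?thesis by auto
      qed
    qed
  next
    case False
    then have yx: "y < x" using xyz by auto
    show ?thesis
    proof (cases "x < z")
      case True
      from sorted_char[OF n yx True] rs obtain i where "i<n" "{y,x,z} = tri n i" by auto
      moreover have "{y,x,z} = {x,y,z}" by auto
      ultimately show ?thesis by auto
    next
      case False
      then have zx: "z < x" using xyz by auto
      show ?thesis
      proof (cases "y < z")
        case True
        from sorted_char[OF n True zx] rs obtain i where "i<n" "{y,z,x} = tri n i" by auto
        moreover have "{y,z,x} = {x,y,z}" by auto
        ultimately show ?thesis by auto
      next
        case False
        then have "z < y" using xyz by auto
        from sorted_char[OF n this yx] rs obtain i where "i<n" "{z,y,x} = tri n i" by auto
        moreover have "{z,y,x} = {x,y,z}" by auto
        ultimately show ?thesis by auto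
      qed
    qed
  qed
  then show ?thesis using xyz by auto
qed



lemma m12: "((i+1) mod n + 1) mod n = (i + 2) mod (n::nat)"
proof -
  have "((i+1) mod n + 1) mod n = (i+1+1) mod n" by (rule mod_add_left_eq)
  then show ?thesis by (simp add: add.assoc)
qed

lemma tri_distinct:
  fixes i n :: nat
  assumes "7 \<le> n" "i < n"
  shows "i \<noteq> (i+1) mod n" "i \<noteq> (i+2) mod n" "(i+1) mod n \<noteq> (i+2) mod n"
proof -
  have n2: "2 \<le> n" using assms by auto
  show "i \<noteq> (i+1) mod n" "i \<noteq> (i+2) mod n" "(i+1) mod n \<noteq> (i+2) mod n"
    unfolding m1_eq[OF assms(2)] m2_eq[OF assms(2) n2] using assms by auto
qed

lemma tri_edges_tri:
  assumes "7 \<le> n" "i < n"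
  shows "tri_edges (tri n i) = {{i, (i+1) mod n}, {i, (i+2) mod n}, {(i+1) mod n, (i+2) mod n}}"
  unfolding tri_def using tri_distinct[OF assms] by (simp add: tri_edges_3)

lemma tri_in:
  assumes "7 \<le> n" "i < n"
  shows "tri n i \<in> triangles (TC_edges n)"
proof -
  have c: "card (tri n i) = 3" unfolding tri_def using tri_distinct[OF assms] by auto
  have lt: "i < n" "(i+1) mod n < n" "(i+2) mod n < n" using assms by auto
  have e: "(i + 2) mod n = ((i+1) mod n + 1) mod n" by (rule m12[symmetric])
  have r1: "rel n i ((i+1) mod n)" "rel n i ((i+2) mod n)" "rel n ((i+1) mod n) ((i+2) mod n)"
    using lt e unfolding rel_def by blast+
  show ?thesis unfolding triangles_def using c r1 tri_edges_tri[OF assms] by (auto simp: TC_mem)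
qed

lemma triangles_TC:
  assumes "7 \<le> n"
  shows "triangles (TC_edges n) = tri n ` {..<n}"
  using tri_char[OF assms] tri_in[OF assms] by auto

lemma Qa:
  assumes n: "7 \<le> n" and ij: "i < n" "j < n" and f: "{i, (i+1) mod n} \<in> tri_edges (tri n j)"
  shows "j = i \<or> (j+1) mod n = i"
proof -
  have n2: "2 \<le> n" using n by auto
  show ?thesis using f n ij unfolding tri_edges_tri[OF n ij(2)]
    unfolding m1_eq[OF ij(1)] m1_eq[OF ij(2)] m2_eq[OF ij(1) n2] m2_eq[OF ij(2) n2]
    by (auto simp: doubleton_eq_iff split: if_splits)
qed

lemma Qb:
  assumes n: "7 \<le> n" and ij: "i < n" "j < n" and f: "{(i+1) mod n, (i+2) mod n} \<in> tri_edges (tri n j)"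
  shows "j = i \<or> j = (i+1) mod n"
proof -
  have n2: "2 \<le> n" using n by auto
  show ?thesis using f n ij unfolding tri_edges_tri[OF n ij(2)]
    unfolding m1_eq[OF ij(1)] m1_eq[OF ij(2)] m2_eq[OF ij(1) n2] m2_eq[OF ij(2) n2]
    by (auto simp: doubleton_eq_iff split: if_splits)
qed

lemma Qc:
  assumes n: "7 \<le> n" and ij: "i < n" "j < n" and f: "{i, (i+2) mod n} \<in> tri_edges (tri n j)"
  shows "j = i"
proof -
  have n2: "2 \<le> n" using n by auto
  show ?thesis using f n ij unfolding tri_edges_tri[OF n ij(2)]
    unfolding m1_eq[OF ij(1)] m1_eq[OF ij(2)] m2_eq[OF ij(1) n2] m2_eq[OF ij(2) n2]
    by (auto simp: doubleton_eq_iff split: if_splits)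
qed



lemma TC_img: "TC_edges n = (\<lambda>i. {i,(i+1) mod n}) ` {..<n} \<union> (\<lambda>i. {i,(i+2) mod n}) ` {..<n}"
  by (auto simp: TC_edges_def)

lemma m1_inj: "j1 < n \<Longrightarrow> j2 < (n::nat) \<Longrightarrow> (j1+1) mod n = (j2+1) mod n \<Longrightarrow> j1 = j2"
  unfolding m1_eq by (auto split: if_splits)

lemma good_TC:
  assumes n: "7 \<le> n"
  shows "good (TC_edges n)"
  unfolding good_def
proof (intro conjI)
  show "finite (TC_edges n)" unfolding TC_img by auto
  show "finite (triangles (TC_edges n))" unfolding triangles_TC[OF n] by auto
  show "\<forall>T\<in>triangles (TC_edges n). (\<exists>f\<in>tri_edges T. priv (TC_edges n) T f) \<and>
        (\<forall>f\<in>tri_edges T. \<forall>T1\<in>triangles (TC_edges n). \<forall>T2\<in>triangles (TC_edges n).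
            f \<in> tri_edges T1 \<longrightarrow> f \<in> tri_edges T2 \<longrightarrow> T1 \<noteq> T \<longrightarrow> T2 \<noteq> T \<longrightarrow> T1 = T2)"
  proof
  fix T assume "T \<in> triangles (TC_edges n)"
  then obtain i where i: "i < n" "T = tri n i" using triangles_TC[OF n] by auto
  note te = tri_edges_tri[OF n i(1)]
  have A: "\<exists>f\<in>tri_edges T. priv (TC_edges n) T f"
  proof (rule bexI[of _ "{i, (i+2) mod n}"])
    show "{i, (i+2) mod n} \<in> tri_edges T" using te i by auto
    show "priv (TC_edges n) T {i, (i+2) mod n}" unfolding priv_def
    proof (intro ballI impI)
      fix T' assume "T' \<in> triangles (TC_edges n)" "{i, (i+2) mod n} \<in> tri_edges T'"
      then obtain j where "j < n" "T' = tri n j" "{i, (i+2) mod n} \<in> tri_edges (tri n j)"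
        using triangles_TC[OF n] by auto
      then show "T' = T" using Qc[OF n i(1)] i by auto
    qed
  qed
  have B: "\<forall>f\<in>tri_edges T. \<forall>T1\<in>triangles (TC_edges n). \<forall>T2\<in>triangles (TC_edges n).
         f \<in> tri_edges T1 \<longrightarrow> f \<in> tri_edges T2 \<longrightarrow> T1 \<noteq> T \<longrightarrow> T2 \<noteq> T \<longrightarrow> T1 = T2"
  proof (intro ballI impI)
    fix f T1 T2 assume f: "f \<in> tri_edges T" and T1: "T1 \<in> triangles (TC_edges n)" and T2: "T2 \<in> triangles (TC_edges n)"
      and f1: "f \<in> tri_edges T1" and f2: "f \<in> tri_edges T2" and d1: "T1 \<noteq> T" and d2: "T2 \<noteq> T"
    obtain j1 where j1: "j1 < n" "T1 = tri n j1" using T1 triangles_TC[OF n] by auto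
    obtain j2 where j2: "j2 < n" "T2 = tri n j2" using T2 triangles_TC[OF n] by auto
    have n1: "j1 \<noteq> i" "j2 \<noteq> i" using d1 d2 i j1 j2 by auto
    from f te i consider "f = {i, (i+1) mod n}" | "f = {i, (i+2) mod n}" | "f = {(i+1) mod n, (i+2) mod n}" by auto
    then show "T1 = T2"
    proof cases
      case 1
      then have "(j1+1) mod n = i" "(j2+1) mod n = i"
        using Qa[OF n i(1) j1(1)] Qa[OF n i(1) j2(1)] f1 f2 j1 j2 n1 by auto
      then have "j1 = j2" using m1_inj[OF j1(1) j2(1)] by auto
      then show ?thesis using j1 j2 by simp
    next
      case 2
      then have "j1 = i" using Qc[OF n i(1) j1(1)] f1 j1 by auto
      then show ?thesis using n1 by simp
    next
      case 3
      then have "j1 = (i+1) mod n" "j2 = (i+1) mod n"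
        using Qb[OF n i(1) j1(1)] Qb[OF n i(1) j2(1)] f1 f2 j1 j2 n1 by auto
      then show ?thesis using j1 j2 by simp
    qed
  qed
  show "(\<exists>f\<in>tri_edges T. priv (TC_edges n) T f) \<and>
        (\<forall>f\<in>tri_edges T. \<forall>T1\<in>triangles (TC_edges n). \<forall>T2\<in>triangles (TC_edges n).
            f \<in> tri_edges T1 \<longrightarrow> f \<in> tri_edges T2 \<longrightarrow> T1 \<noteq> T \<longrightarrow> T2 \<noteq> T \<longrightarrow> T1 = T2)"
    using A B by blast
  qed
qed

lemma card_TC_edges: "card (TC_edges n) \<le> 2 * n"
proof -
  have "card (TC_edges n) \<le> card ((\<lambda>i. {i,(i+1) mod n}) ` {..<n}) + card ((\<lambda>i. {i,(i+2) mod n}) ` {..<n})"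
    unfolding TC_img by (rule card_Un_le)
  also have "\<dots> \<le> n + n" by (intro add_mono) (auto intro: card_image_le[THEN order_trans])
  finally show ?thesis by simp
qed

lemma card_tri_TC: "7 \<le> n \<Longrightarrow> card (triangles (TC_edges n)) \<le> n"
  unfolding triangles_TC by (rule card_image_le[THEN order_trans]) auto

theorem theorem3:
  shows "\<exists>C::real. C > 0 \<and> (\<exists>N::nat. \<forall>n\<ge>N. \<forall>p::real. 0 < p \<and> p < 1 \<longrightarrow>
           tau_SB p (TC_edges n) \<le> ennreal (C * real n / min p (1/2)))"
proof (intro exI conjI allI impI)
  show "(14::real) > 0" by simp
  fix n :: nat and p :: real
  assume n: "7 \<le> n" and p: "0 < p \<and> p < 1"
  define q where "q = min p (1/2)"
  define a where "a = 12 / min p (1/2)"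
  have q: "0 < q" "q \<le> 1/2" using p by (auto simp: q_def)
  have good: "good (TC_edges n)" by (rule good_TC[OF n])
  have finT: "finite (triangles (TC_edges n))" and finE: "finite (TC_edges n)"
    using good by (auto simp: good_def)
  show "tau_SB p (TC_edges n) \<le> ennreal (14 * real n / min p (1/2))"
    unfolding tau_SB_def
  proof (rule SUP_least)
    fix s :: "nat set \<Rightarrow> int" assume s: "s \<in> {s. \<forall>e\<in>TC_edges n. s e \<in> {-1, 1}}"
    then have sS: "s \<in> SS (TC_edges n)" by (simp add: SS_def)
    have "expected_time p (TC_edges n) s \<le> ennreal (Phi a 2 (TC_edges n) s)"
      using p by (intro expected_time_bound[OF good sS]) (auto simp: a_def)
    also have "\<dots> \<le> ennreal (14 * real n / min p (1/2))"
    proof (rule ennreal_leI)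
      have c1: "card (imbalanced (TC_edges n) s) \<le> n"
        using card_mono[OF finT, of "imbalanced (TC_edges n) s"] card_tri_TC[OF n]
        by (auto simp: imbalanced_def)
      have c2: "card (negs (TC_edges n) s) \<le> 2 * n"
        using card_mono[OF finE, of "negs (TC_edges n) s"] card_TC_edges[of n]
        by (auto simp: negs_def)
      have a0: "a \<ge> 0" using q by (simp add: a_def q_def[symmetric])
      have r1: "real (card (imbalanced (TC_edges n) s)) \<le> real n" using c1 by (rule of_nat_mono)
      have r2: "real (card (negs (TC_edges n) s)) \<le> 2 * real n" using c2 of_nat_mono[OF c2] by simp
      have "Phi a 2 (TC_edges n) s \<le> a * real n + 2 * (2 * real n)"
        unfolding Phi_def using mult_left_mono[OF r1 a0] r2 by linarith
      also have "a * real n + 2 * (2 * real n) = 12 * real n / q + 4 * real n" by (simp add: a_def q_def[symmetric])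
      also have "4 * real n \<le> 2 * real n / q"
      proof -
        have "2 * real n / (1/2) \<le> 2 * real n / q"
          by (rule divide_left_mono) (use q in auto)
        then show ?thesis by simp
      qed
      then have "12 * real n / q + 4 * real n \<le> 12 * real n / q + 2 * real n / q" by simp
      also have "12 * real n / q + 2 * real n / q = (12 * real n + 2 * real n) / q"
        by (rule add_divide_distrib[symmetric])
      also have "\<dots> = 14 * real n / q" by simp
      finally show "Phi a 2 (TC_edges n) s \<le> 14 * real n / min p (1/2)" by (simp add: q_def)
    qed
    finally show "expected_time p (TC_edges n) s \<le> ennreal (14 * real n / min p (1/2))" .
  qed
qed

end
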